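(* Let $\tau>\frac{3+\sqrt{17}}{2}$. For Lebesgue-almost every $\gamma\in(0,\tfrac12)$ the following holds: for every $\alpha\in D_{\gamma,\tau}$ with convergents $p_n/q_n$, for all sufficiently large even $n$, $$\frac{p_n}{q_n}+\frac{\gamma}{q_n^{\tau+1}}<\frac{p_{n+2}}{q_{n+2}}-\frac{\gamma}{q_{n+2}^{\tau+1}} \iff \frac{p_n}{q_n}+\frac{\gamma}{q_n^{\tau+1}}<\frac{p_{n+2}}{q_{n+2}}-\frac{\gamma}{q_{n+2}^{\tau+1}}-\frac{2\gamma}{q_{n+2}^{\tau-1}}.$$
   Context: For $x\in\mathbb{R}$, $\|x\|:=\min_{p\in\mathbb{Z}}|x-p|$; $\mathbb{N}=\{1,2,\dots\}$. For $\gamma>0,\tau\ge1$, $D_{\gamma,\tau}:=\{\alpha\in(0,1): \|q\alpha\|\ge\gamma/q^\tau\ \forall q\in\mathbb{N}\}$; its elements are irrational. For irrational $\alpha\in(0,1)$ write $\alpha=\cfrac{1}{a_1+\cfrac{1}{a_2+\cdots}}$, and let $p_n/q_n$ ($n\ge0$) be its convergents: $p_{-1}=1,q_{-1}=0,p_0=0,q_0=1$, $p_n=a_np_{n-1}+p_{n-2}$, $q_n=a_nq_{n-1}+q_{n-2}$. *)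

theory Defs
  imports "HOL-Analysis.Analysis"
begin

definition dist_int :: "real \<Rightarrow> real" where
  "dist_int x = (INF p::int. \<bar>x - real_of_int p\<bar>)"

definition Dset :: "real \<Rightarrow> real \<Rightarrow> real set" where
  "Dset \<gamma> \<tau> = {\<alpha>. 0 < \<alpha> \<and> \<alpha> < 1 \<and>
      (\<forall>q::nat. q \<ge> 1 \<longrightarrow> dist_int (real q * \<alpha>) \<ge> \<gamma> / real q powr \<tau>)}"

fun cf_rem :: "real \<Rightarrow> nat \<Rightarrow> real" where
  "cf_rem \<alpha> 0 = \<alpha>"
| "cf_rem \<alpha> (Suc n) = frac (1 / cf_rem \<alpha> n)"

definition cf_a :: "real \<Rightarrow> nat \<Rightarrow> int" where
  "cf_a \<alpha> n = \<lfloor>1 / cf_rem \<alpha> (n - 1)\<rfloor>"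

text \<open>Convergents p_n/q_n for n >= 0, using p_{-1}=1, q_{-1}=0, p_0=0, q_0=1.\<close>
fun cf_p :: "real \<Rightarrow> nat \<Rightarrow> int" where
  "cf_p \<alpha> 0 = 0"
| "cf_p \<alpha> (Suc 0) = cf_a \<alpha> 1 * 0 + 1"
| "cf_p \<alpha> (Suc (Suc n)) = cf_a \<alpha> (n + 2) * cf_p \<alpha> (Suc n) + cf_p \<alpha> n"

fun cf_q :: "real \<Rightarrow> nat \<Rightarrow> int" where
  "cf_q \<alpha> 0 = 1"
| "cf_q \<alpha> (Suc 0) = cf_a \<alpha> 1 * 1 + 0"
| "cf_q \<alpha> (Suc (Suc n)) = cf_a \<alpha> (n + 2) * cf_q \<alpha> (Suc n) + cf_q \<alpha> n"

end

theory Submission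
  imports Defs
begin


lemma cf_det: "cf_p \<alpha> (Suc n) * cf_q \<alpha> n - cf_p \<alpha> n * cf_q \<alpha> (Suc n) = (-1)^n"
proof (induction n)
  case 0 then show ?case by simp
next
  case (Suc n)
  have "cf_p \<alpha> (Suc (Suc n)) * cf_q \<alpha> (Suc n) - cf_p \<alpha> (Suc n) * cf_q \<alpha> (Suc (Suc n))
    = -(cf_p \<alpha> (Suc n) * cf_q \<alpha> n - cf_p \<alpha> n * cf_q \<alpha> (Suc n))"
    by (simp add: algebra_simps)
  then show ?case using Suc by simp
qed

lemma cf_det2: "cf_p \<alpha> (n+2) * cf_q \<alpha> n - cf_p \<alpha> n * cf_q \<alpha> (n+2) = cf_a \<alpha> (n+2) * (-1)^n"
proof -
  have "cf_p \<alpha> (n+2) * cf_q \<alpha> n - cf_p \<alpha> n * cf_q \<alpha> (n+2)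
     = cf_a \<alpha> (n+2) * (cf_p \<alpha> (Suc n) * cf_q \<alpha> n - cf_p \<alpha> n * cf_q \<alpha> (Suc n))"
    by (simp add: algebra_simps)
  then show ?thesis by (simp add: cf_det)
qed

lemma cf_rem_irr:
  assumes "\<alpha> \<notin> \<rat>" "0 < \<alpha>" "\<alpha> < 1"
  shows "cf_rem \<alpha> n \<notin> \<rat> \<and> 0 < cf_rem \<alpha> n \<and> cf_rem \<alpha> n < 1"
proof (induction n)
  case 0 then show ?case using assms by simp
next
  case (Suc n)
  define r where "r = cf_rem \<alpha> n"
  have r: "r \<notin> \<rat>" "0 < r" "r < 1" using Suc r_def by auto
  have i1: "1 / r \<notin> \<rat>"
  proof
    assume "1 / r \<in> \<rat>"
    then have "1 / (1/r) \<in> \<rat>" by (rule Rats_divide[OF Rats_1])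
    then show False using r by simp
  qed
  have i2: "frac (1/r) \<notin> \<rat>"
  proof
    assume "frac (1/r) \<in> \<rat>"
    then have "frac (1/r) + of_int \<lfloor>1/r\<rfloor> \<in> \<rat>" by (rule Rats_add[OF _ Rats_of_int])
    moreover have "1/r = frac (1/r) + of_int \<lfloor>1/r\<rfloor>" by (simp add: frac_def)
    ultimately show False using i1 by metis
  qed
  have "frac (1/r) \<noteq> 0" using i2 Rats_0 by metis
  moreover have "frac (1/r) \<ge> 0" "frac (1/r) < 1" by (auto simp: frac_lt_1)
  ultimately show ?case using i2 by (simp add: r_def)
qed

lemma cf_a_ge1:
  assumes "\<alpha> \<notin> \<rat>" "0 < \<alpha>" "\<alpha> < 1" "k \<ge> 1"
  shows "cf_a \<alpha> k \<ge> 1"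
proof -
  have h: "0 < cf_rem \<alpha> (k-1)" "cf_rem \<alpha> (k-1) < 1" using cf_rem_irr[OF assms(1-3)] by auto
  then have "1 / cf_rem \<alpha> (k-1) \<ge> 1" by simp
  then show ?thesis unfolding cf_a_def by linarith
qed

lemma cf_q_ge:
  assumes "\<And>k. k \<ge> 1 \<Longrightarrow> cf_a \<alpha> k \<ge> 1"
  shows "1 \<le> cf_q \<alpha> n \<and> int n \<le> cf_q \<alpha> n \<and> 1 \<le> cf_q \<alpha> (Suc n) \<and> int (Suc n) \<le> cf_q \<alpha> (Suc n)"
proof (induction n)
  case 0 then show ?case using assms[of 1] by simp
next
  case (Suc n)
  have a: "cf_a \<alpha> (n+2) \<ge> 1" using assms by simp
  have "cf_a \<alpha> (Suc (Suc n)) * cf_q \<alpha> (Suc n) \<ge> cf_q \<alpha> (Suc n)"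
    using a Suc by (simp add: mult_le_cancel_right1 numeral_2_eq_2)
  then have h: "cf_q \<alpha> (Suc (Suc n)) \<ge> cf_q \<alpha> (Suc n) + cf_q \<alpha> n" by simp
  have "int (Suc (Suc n)) = int n + 2" by simp
  then show ?case using Suc h by linarith
qed

lemma cf_a_le_q:
  assumes "\<And>k. k \<ge> 1 \<Longrightarrow> cf_a \<alpha> k \<ge> 1"
  shows "cf_a \<alpha> (n+2) \<le> cf_q \<alpha> (n+2) \<and> cf_q \<alpha> n \<le> cf_q \<alpha> (n+2)"
proof -
  have q: "1 \<le> cf_q \<alpha> n" "1 \<le> cf_q \<alpha> (Suc n)" using cf_q_ge[OF assms, of n] by auto
  have a: "cf_a \<alpha> (n+2) \<ge> 1" using assms by simp
  have "cf_a \<alpha> (Suc (Suc n)) * cf_q \<alpha> (Suc n) \<ge> cf_a \<alpha> (Suc (Suc n))"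
    using a q by (simp add: mult_le_cancel_left1 numeral_2_eq_2)
  then have "cf_a \<alpha> (Suc (Suc n)) \<le> cf_q \<alpha> (Suc (Suc n)) \<and> cf_q \<alpha> n \<le> cf_q \<alpha> (Suc (Suc n))"
    using q a by (simp add: add_increasing2)
  then show ?thesis by (simp add: numeral_2_eq_2)
qed

lemma Dset_irr:
  assumes "\<alpha> \<in> Dset \<gamma> \<tau>" "\<gamma> > 0"
  shows "\<alpha> \<notin> \<rat>"
proof
  assume "\<alpha> \<in> \<rat>"
  then obtain r s where rs: "s > 0" "\<alpha> = of_int r / of_int s" by (metis Rats_cases')
  define q where "q = nat s"
  have q1: "q \<ge> 1" using rs q_def by simp
  have "real q * \<alpha> = real_of_int r" using rs q_def by simp
  then have "dist_int (real q * \<alpha>) \<le> \<bar>real q * \<alpha> - real_of_int r\<bar>"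
    unfolding dist_int_def by (intro cINF_lower) (auto intro: bdd_belowI[of _ 0])
  then have "dist_int (real q * \<alpha>) \<le> 0" using \<open>real q * \<alpha> = _\<close> by simp
  moreover have "dist_int (real q * \<alpha>) \<ge> \<gamma> / real q powr \<tau>" using assms(1) q1 unfolding Dset_def by auto
  moreover have "\<gamma> / real q powr \<tau> > 0" using q1 assms(2) by simp
  ultimately show False by linarith
qed



lemma powr_shift1: "x > 0 \<Longrightarrow> x powr b = x powr (b - 1) * (x::real)"
proof -
  assume "x > 0"
  have "x powr b = x powr ((b-1) + 1)" by simp
  also have "\<dots> = x powr (b-1) * x powr 1" by (rule powr_add)
  finally show ?thesis using \<open>x>0\<close> by simp
qed

definition bad :: "real \<Rightarrow> real \<Rightarrow> real \<Rightarrow> real \<Rightarrow> real set" where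
 "bad \<tau> q q' a = {a/(q*q') / (1/q powr (\<tau>+1) + 1/q' powr (\<tau>+1) + 2/q' powr (\<tau>-1)) ..<
    a/(q*q') / (1/q powr (\<tau>+1) + 1/q' powr (\<tau>+1))} \<inter> {0<..<1/2}"

lemma bad_mem:
  assumes "q > 0" "q' > 0" "0 < g" "g < 1/2" "x = a/(q*q')"
    "g/q powr (\<tau>+1) + g/q' powr (\<tau>+1) < x"
    "x \<le> g/q powr (\<tau>+1) + g/q' powr (\<tau>+1) + 2*g/q' powr (\<tau>-1)"
  shows "g \<in> bad \<tau> q q' a"
proof -
  define c1 where "c1 = 1/q powr (\<tau>+1)"
  define c2 where "c2 = 1/q' powr (\<tau>+1)"
  define t where "t = 2/q' powr (\<tau>-1)"
  have pos: "c1 > 0" "c2 > 0" "t > 0" using assms unfolding c1_def c2_def t_def by auto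
  have e: "g/q powr (\<tau>+1) + g/q' powr (\<tau>+1) = g * (c1+c2)"
     "g/q powr (\<tau>+1) + g/q' powr (\<tau>+1) + 2*g/q' powr (\<tau>-1) = g*(c1+c2+t)"
    unfolding c1_def c2_def t_def by (simp_all add: field_simps)
  have "g < x / (c1+c2)" using assms(6) pos e by (simp add: pos_less_divide_eq)
  moreover have "x / (c1+c2+t) \<le> g" using assms(7) pos e by (simp add: pos_divide_le_eq)
  ultimately show ?thesis using assms unfolding bad_def c1_def c2_def t_def by auto
qed

lemma bad_large:
  assumes "\<tau> > 3" "q \<ge> 1" "q powr (\<tau>-3) \<ge> 3" "q' \<ge> q" "a \<ge> 1" "g \<in> bad \<tau> q q' a"
  shows "a * q powr \<tau> < q'"
proof -
  define c1 where "c1 = 1/q powr (\<tau>+1)"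
  define c2 where "c2 = 1/q' powr (\<tau>+1)"
  define t where "t = 2/q' powr (\<tau>-1)"
  have q'1: "q' \<ge> 1" using assms by linarith
  have pos: "c1 > 0" "c2 > 0" "t > 0" using assms q'1 unfolding c1_def c2_def t_def by auto
  have "a/(q*q') / (c1+c2+t) \<le> g" "g < 1/2" using assms(6) unfolding bad_def c1_def c2_def t_def by auto
  then have "a/(q*q') / (c1+c2+t) < 1/2" by linarith
  moreover have S: "c1+c2+t > 0" using pos by simp
  ultimately have "a/(q*q') < (1/2) * (c1+c2+t)" using pos_divide_less_eq[OF S] by metis
  then have "a/(q*q') < (c1+c2+t) * (1/2)" by (simp add: mult.commute)
  then have "a/(q*q') * (q*q') < (c1+c2+t) * (1/2) * (q*q')" using assms q'1
    by (intro mult_strict_right_mono) auto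
  then have "2 * a < q*q'*c1 + q*q'*c2 + q*q'*t" using assms q'1
    by (simp add: field_simps)
  moreover have "q*q'*c1 = q' / q powr \<tau>"
  proof -
    have "q powr (\<tau>+1) = q powr \<tau> * q" using assms by (simp add: powr_add)
    then show ?thesis unfolding c1_def using assms by simp
  qed
  moreover have "q*q'*c2 \<le> 1/3"
  proof -
    have "q' powr (\<tau>+1) = q' powr \<tau> * q'" using q'1 by (simp add: powr_add)
    then have "q*q'*c2 = q / q' powr \<tau>" unfolding c2_def using q'1 by simp
    also have "\<dots> \<le> q / q powr \<tau>"
      using assms by (intro divide_left_mono powr_mono2) auto
    also have "q powr \<tau> = q powr (\<tau>-3) * q * q * q"
    proof -
      have "q powr \<tau> = q powr (\<tau>-3) * q powr 3" by (simp add: powr_add[symmetric])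
      moreover have "q powr (3::real) = q^3" using assms by (simp add: powr_numeral)
      ultimately show ?thesis by (simp add: power3_eq_cube)
    qed
    also have "q / (q powr (\<tau>-3) * q * q * q) \<le> 1/3"
    proof -
      have X: "q powr (\<tau>-3) * (q*q) \<ge> 3 * 1"
        using assms by (intro mult_mono) (auto simp: one_le_power[of q 2, simplified power2_eq_square])
      have "q / (q powr (\<tau>-3) * q * q * q) = 1 / (q powr (\<tau>-3) * (q*q))"
        using assms by (simp add: field_simps)
      also have "\<dots> \<le> 1/3" using X by (intro divide_left_mono) auto
      finally show ?thesis .
    qed
    finally show ?thesis .
  qed
  moreover have "q*q'*t \<le> 2/3"
  proof -
    have "q' powr (\<tau>-1) = q' powr (\<tau>-2) * q'" using q'1 powr_shift1[of q' "\<tau>-1"] by simp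
    then have "q*q'*t = 2 * q / q' powr (\<tau>-2)" unfolding t_def using q'1 by simp
    also have "\<dots> \<le> 2 * q / q powr (\<tau>-2)"
      using assms by (intro divide_left_mono powr_mono2) auto
    also have "q powr (\<tau>-2) = q powr (\<tau>-3) * q"
      using assms powr_shift1[of q "\<tau>-2"] by simp
    also have "2 * q / (q powr (\<tau>-3) * q) = 2 / q powr (\<tau>-3)"
      using assms by simp
    also have "\<dots> \<le> 2/3" using assms by (intro divide_left_mono) auto
    finally show ?thesis .
  qed
  ultimately have "2 * a < q' / q powr \<tau> + 1" by linarith
  then have "a < q' / q powr \<tau>" using assms by linarith
  then show ?thesis using assms by (simp add: field_simps)
qed

lemma bad_sets[measurable]: "bad \<tau> q q' a \<in> sets lborel"
  unfolding bad_def by simp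

lemma bad_meas:
  assumes "q \<ge> 1" "q' \<ge> 1" "a > 0"
  shows "measure lborel (bad \<tau> q q' a) \<le> 2*a*q powr (2*\<tau>+1) / q' powr \<tau>"
proof -
  define c1 where "c1 = 1/q powr (\<tau>+1)"
  define c2 where "c2 = 1/q' powr (\<tau>+1)"
  define t where "t = 2/q' powr (\<tau>-1)"
  define x where "x = a/(q*q')"
  have pos: "c1 > 0" "c2 > 0" "t > 0" "x > 0" using assms unfolding c1_def c2_def t_def x_def by auto
  have lu: "x/(c1+c2+t) \<le> x/(c1+c2)" using pos by (intro divide_left_mono) auto
  have "measure lborel (bad \<tau> q q' a) \<le> measure lborel {x/(c1+c2+t) .. x/(c1+c2)}"
    by (rule measure_mono_fmeasurable) (auto simp: bad_def c1_def c2_def t_def x_def intro: fmeasurable_compact)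
  also have "\<dots> = x/(c1+c2) - x/(c1+c2+t)" using lu by simp
  also have "\<dots> = x*t/((c1+c2)*(c1+c2+t))" using pos by (simp add: field_simps)
  also have "\<dots> \<le> x*t/(c1*c1)"
    using pos by (intro divide_left_mono mult_mono) auto
  also have "x*t/(c1*c1) = 2*a*q powr (2*\<tau>+1) / q' powr \<tau>"
  proof -
    have e1: "q powr (\<tau>+1) * q powr (\<tau>+1) = q powr (2*\<tau>+1) * q"
    proof -
      have "q powr (2*\<tau>+1) * q = q powr (2*\<tau>+1) * q powr 1" using assms by simp
      also have "\<dots> = q powr (2*\<tau>+1+1)" by (rule powr_add[symmetric])
      also have "2*\<tau>+1+1 = (\<tau>+1)+(\<tau>+1)" by simp
      also have "q powr ((\<tau>+1)+(\<tau>+1)) = q powr (\<tau>+1) * q powr (\<tau>+1)" by (rule powr_add)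
      finally show ?thesis by simp
    qed
    have e2: "q' powr \<tau> = q' powr (\<tau>-1) * q'" using assms powr_shift1[of q' "\<tau>"] by simp
    show ?thesis unfolding c1_def t_def x_def using assms e1 e2 by (simp add: field_simps)
  qed
  finally show ?thesis .
qed

lemma trade:
  fixes q q' a \<epsilon> \<tau> :: real
  assumes "q \<ge> 1" "a \<ge> 1" "q' \<ge> a * q powr \<tau>" "0 < \<epsilon>" "\<epsilon> < \<tau> - 1"
  shows "2*a*q powr (2*\<tau>+1) / q' powr \<tau> \<le>
    2 * a powr (-(\<tau>-2-\<epsilon>)) * q powr (-(\<tau>*(\<tau>-1-\<epsilon>) - 2*\<tau> - 1)) * q' powr (-(1+\<epsilon>))"
proof -
  have q'pos: "q' > 0" proof -
    have "q \<noteq> 0" using assms by simp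
    then have "q powr \<tau> > 0" by simp
    then have "a * q powr \<tau> > 0" using assms by simp
    then show ?thesis using assms by linarith
  qed
  have "q' powr \<tau> = q' powr (1+\<epsilon>) * q' powr (\<tau>-1-\<epsilon>)" by (simp add: powr_add[symmetric])
  also have "\<dots> \<ge> q' powr (1+\<epsilon>) * (a * q powr \<tau>) powr (\<tau>-1-\<epsilon>)"
    using assms q'pos by (intro mult_left_mono powr_mono2) auto
  also have "(a * q powr \<tau>) powr (\<tau>-1-\<epsilon>) = a powr (\<tau>-1-\<epsilon>) * q powr (\<tau>*(\<tau>-1-\<epsilon>))"
    using assms by (simp add: powr_mult powr_powr)
  finally have D: "q' powr \<tau> \<ge> q' powr (1+\<epsilon>) * (a powr (\<tau>-1-\<epsilon>) * q powr (\<tau>*(\<tau>-1-\<epsilon>)))" .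
  have "2*a*q powr (2*\<tau>+1) / q' powr \<tau> \<le>
     2*a*q powr (2*\<tau>+1) / (q' powr (1+\<epsilon>) * (a powr (\<tau>-1-\<epsilon>) * q powr (\<tau>*(\<tau>-1-\<epsilon>))))"
    using assms q'pos D by (intro divide_left_mono mult_pos_pos) auto
  also have "\<dots> = 2 * (a / a powr (\<tau>-1-\<epsilon>)) * (q powr (2*\<tau>+1) / q powr (\<tau>*(\<tau>-1-\<epsilon>))) / q' powr (1+\<epsilon>)"
    by (simp add: field_simps)
  also have "a / a powr (\<tau>-1-\<epsilon>) = a powr (-(\<tau>-2-\<epsilon>))"
  proof -
    have "a powr (-(\<tau>-2-\<epsilon>)) = a powr (1 - (\<tau>-1-\<epsilon>))"
      by (rule arg_cong[where f="\<lambda>e. a powr e"]) simp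
    also have "\<dots> = a powr 1 / a powr (\<tau>-1-\<epsilon>)" by (rule powr_diff)
    finally show ?thesis using assms by simp
  qed
  also have "q powr (2*\<tau>+1) / q powr (\<tau>*(\<tau>-1-\<epsilon>)) = q powr (-(\<tau>*(\<tau>-1-\<epsilon>) - 2*\<tau> - 1))"
  proof -
    have "q powr (2*\<tau>+1) / q powr (\<tau>*(\<tau>-1-\<epsilon>)) = q powr (2*\<tau>+1 - \<tau>*(\<tau>-1-\<epsilon>))"
      by (rule powr_diff[symmetric])
    also have "\<dots> = q powr (-(\<tau>*(\<tau>-1-\<epsilon>) - 2*\<tau> - 1))"
      by (rule arg_cong[where f="\<lambda>e. q powr e"]) simp
    finally show ?thesis .
  qed
  also have "2 * a powr (-(\<tau>-2-\<epsilon>)) * q powr (-(\<tau>*(\<tau>-1-\<epsilon>) - 2*\<tau> - 1)) / q' powr (1+\<epsilon>)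
     = 2 * a powr (-(\<tau>-2-\<epsilon>)) * q powr (-(\<tau>*(\<tau>-1-\<epsilon>) - 2*\<tau> - 1)) * q' powr (-(1+\<epsilon>))"
    unfolding powr_minus_divide[of q' "1+\<epsilon>"] by simp
  finally show ?thesis .
qed



definition Fset :: "real \<Rightarrow> nat \<Rightarrow> nat \<Rightarrow> real set" where
  "Fset \<tau> q0 m = (\<Union>q\<in>{q0..m}. \<Union>a\<in>{1..m}. bad \<tau> (real q) (real m) (real a))"

lemma bad_sets_borel: "bad \<tau> q q' a \<in> sets borel"
  unfolding bad_def by simp

lemma Fset_sets[measurable]: "Fset \<tau> q0 m \<in> sets lborel"
  unfolding Fset_def by (intro sets.finite_UN) (auto simp: bad_sets_borel)

lemma Fset_fin: "emeasure lborel (Fset \<tau> q0 m) < \<infinity>"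
proof -
  have "emeasure lborel (Fset \<tau> q0 m) \<le> emeasure lborel {0..1/2::real}"
    by (rule emeasure_mono) (auto simp: Fset_def bad_def)
  also have "\<dots> = ennreal (1/2)" by simp
  also have "\<dots> < \<infinity>" by (metis ennreal_less_top infinity_ennreal_def)
  finally show ?thesis .
qed

lemma bad_bound:
  fixes \<tau> \<epsilon> :: real and q0 q m a :: nat
  assumes "\<tau> > 3" "0 < \<epsilon>" "\<epsilon> < \<tau> - 1" "q0 \<ge> 1"
    "\<And>x::real. x \<ge> q0 \<Longrightarrow> x powr (\<tau>-3) \<ge> 3"
    "q0 \<le> q" "q \<le> m" "1 \<le> a"
  shows "measure lborel (bad \<tau> q m a) \<le>
    2 * real a powr (-(\<tau>-2-\<epsilon>)) * real q powr (-(\<tau>*(\<tau>-1-\<epsilon>) - 2*\<tau> - 1)) * real m powr (-(1+\<epsilon>))"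
proof (cases "bad \<tau> q m a = {}")
  case True
  then show ?thesis by simp
next
  case False
  then obtain g where g: "g \<in> bad \<tau> q m a" by auto
  have q1: "real q \<ge> 1" using assms by simp
  have "real a * real q powr \<tau> < real m"
    using bad_large[OF assms(1) q1 assms(5) _ _ g] assms by simp
  then have "measure lborel (bad \<tau> q m a) \<le> 2*a*real q powr (2*\<tau>+1) / real m powr \<tau>"
    using bad_meas[of q m a \<tau>] assms by simp
  also have "\<dots> \<le> 2 * real a powr (-(\<tau>-2-\<epsilon>)) * real q powr (-(\<tau>*(\<tau>-1-\<epsilon>) - 2*\<tau> - 1)) * real m powr (-(1+\<epsilon>))"
    using trade[where q="real q" and q'="real m" and a="real a" and \<epsilon>=\<epsilon> and \<tau>=\<tau>] assms \<open>real a * real q powr \<tau> < real m\<close> by simp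
  finally show ?thesis .
qed

lemma Fset_bound:
  fixes \<tau> \<epsilon> e1 e2 :: real and q0 m :: nat
  assumes "\<tau> > 3" "0 < \<epsilon>" "\<epsilon> < \<tau> - 1" "q0 \<ge> 1"
    "\<And>x::real. x \<ge> q0 \<Longrightarrow> x powr (\<tau>-3) \<ge> 3"
    "e1 = \<tau>-2-\<epsilon>" "e2 = \<tau>*(\<tau>-1-\<epsilon>) - 2*\<tau> - 1" "e1 > 1" "e2 > 1"
  shows "measure lborel (Fset \<tau> q0 m) \<le>
     2 * (\<Sum>n. real n powr (-e1)) * (\<Sum>n. real n powr (-e2)) * real m powr (-(1+\<epsilon>))"
proof -
  have s1: "summable (\<lambda>n. real n powr (-e1))" using assms by (simp add: summable_real_powr_iff)
  have s2: "summable (\<lambda>n. real n powr (-e2))" using assms by (simp add: summable_real_powr_iff)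
  have "measure lborel (Fset \<tau> q0 m) \<le> (\<Sum>q\<in>{q0..m}. measure lborel (\<Union>a\<in>{1..m}. bad \<tau> (real q) (real m) (real a)))"
    unfolding Fset_def by (intro measure_UNION_le) (auto intro!: sets.finite_UN simp: bad_sets_borel)
  also have "\<dots> \<le> (\<Sum>q\<in>{q0..m}. \<Sum>a\<in>{1..m}. measure lborel (bad \<tau> (real q) (real m) (real a)))"
    by (intro sum_mono measure_UNION_le) (auto simp: bad_sets_borel)
  also have "\<dots> \<le> (\<Sum>q\<in>{q0..m}. \<Sum>a\<in>{1..m}. 2 * real m powr (-(1+\<epsilon>)) * (real q powr (-e2) * real a powr (-e1)))"
    apply (intro sum_mono)
    subgoal for q a using bad_bound[OF assms(1-5), of q m a] assms(6,7) by (simp add: mult_ac)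
    done
  also have "\<dots> = 2 * real m powr (-(1+\<epsilon>)) * ((\<Sum>q\<in>{q0..m}. real q powr (-e2)) * (\<Sum>a\<in>{1..m}. real a powr (-e1)))"
    by (subst sum_product) (simp add: sum_distrib_left)
  also have "\<dots> \<le> 2 * real m powr (-(1+\<epsilon>)) * ((\<Sum>n. real n powr (-e2)) * (\<Sum>n. real n powr (-e1)))"
    by (intro mult_left_mono mult_mono sum_le_suminf s1 s2 sum_nonneg suminf_nonneg) auto
  finally show ?thesis by (simp add: mult_ac)
qed



lemma key:
  fixes P Q P' Q' a g \<tau> :: real
  assumes "Q \<ge> 1" "Q' \<ge> 1" "0 < g" "g < 1/2" "P'*Q - P*Q' = a" "g \<notin> bad \<tau> Q Q' a"
  shows "(P/Q + g/Q powr (\<tau>+1) < P'/Q' - g/Q' powr (\<tau>+1)) \<longleftrightarrow>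
     (P/Q + g/Q powr (\<tau>+1) < P'/Q' - g/Q' powr (\<tau>+1) - 2*g/Q' powr (\<tau>-1))"
proof -
  have d: "P'/Q' - P/Q = a/(Q*Q')" using assms by (simp add: field_simps)
  have pos: "2*g/Q' powr (\<tau>-1) > 0" using assms by simp
  show ?thesis
  proof
    assume L: "P/Q + g/Q powr (\<tau>+1) < P'/Q' - g/Q' powr (\<tau>+1)"
    show "P/Q + g/Q powr (\<tau>+1) < P'/Q' - g/Q' powr (\<tau>+1) - 2*g/Q' powr (\<tau>-1)"
    proof (rule ccontr)
      assume R: "\<not> ?thesis"
      have "g \<in> bad \<tau> Q Q' a"
        by (rule bad_mem[where x="a/(Q*Q')"]) (use assms L R d in auto)
      then show False using assms by simp
    qed
  next
    assume "P/Q + g/Q powr (\<tau>+1) < P'/Q' - g/Q' powr (\<tau>+1) - 2*g/Q' powr (\<tau>-1)"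
    then show "P/Q + g/Q powr (\<tau>+1) < P'/Q' - g/Q' powr (\<tau>+1)" using pos by linarith
  qed
qed

theorem lemma7:
  fixes \<tau> :: real
  assumes "\<tau> > (3 + sqrt 17) / 2"
  shows "AE \<gamma> in lborel. 0 < \<gamma> \<and> \<gamma> < 1/2 \<longrightarrow>
    (\<forall>\<alpha>\<in>Dset \<gamma> \<tau>. \<forall>\<^sub>F n in sequentially. even n \<longrightarrow>
      (cf_p \<alpha> n / cf_q \<alpha> n + \<gamma> / cf_q \<alpha> n powr (\<tau> + 1)
         < cf_p \<alpha> (n+2) / cf_q \<alpha> (n+2) - \<gamma> / cf_q \<alpha> (n+2) powr (\<tau> + 1)
       \<longleftrightarrow>
       cf_p \<alpha> n / cf_q \<alpha> n + \<gamma> / cf_q \<alpha> n powr (\<tau> + 1)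
         < cf_p \<alpha> (n+2) / cf_q \<alpha> (n+2) - \<gamma> / cf_q \<alpha> (n+2) powr (\<tau> + 1)
           - 2 * \<gamma> / cf_q \<alpha> (n+2) powr (\<tau> - 1)))"
proof -
  have s17: "sqrt 17 > 4"
  proof -
    have "sqrt 16 < sqrt (17::real)" by (rule real_sqrt_less_mono) simp
    then show ?thesis by simp
  qed
  have t3: "\<tau> > 3" using assms s17 by (simp add: field_simps)
  have poly: "\<tau>*\<tau> - 3*\<tau> - 2 > 0"
  proof -
    have sq: "sqrt 17 * sqrt 17 = (17::real)" by simp
    have "\<tau>*\<tau> - 3*\<tau> - 2 = (\<tau> - (3 + sqrt 17)/2) * (\<tau> - (3 - sqrt 17)/2)"
      using sq by (simp add: field_simps)
    moreover have "(\<tau> - (3 + sqrt 17)/2) * (\<tau> - (3 - sqrt 17)/2) > 0"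
      using assms s17 t3 by (intro mult_pos_pos) auto
    ultimately show ?thesis by simp
  qed
  define \<epsilon> where "\<epsilon> = min ((\<tau>-3)/2) ((\<tau>*\<tau>-3*\<tau>-2)/(2*\<tau>))"
  define e1 where "e1 = \<tau>-2-\<epsilon>"
  define e2 where "e2 = \<tau>*(\<tau>-1-\<epsilon>) - 2*\<tau> - 1"
  have epa: "\<epsilon> \<le> (\<tau>-3)/2" unfolding \<epsilon>_def by (rule min.cobounded1)
  have "(\<tau>*\<tau>-3*\<tau>-2)/(2*\<tau>) > 0" using t3 poly by (intro divide_pos_pos) auto
  then have ep: "0 < \<epsilon>" "\<epsilon> < \<tau> - 1" using t3 epa unfolding \<epsilon>_def by auto
  have e1: "e1 > 1" using t3 epa unfolding e1_def by auto
  have e2: "e2 > 1"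
  proof -
    have "\<epsilon> \<le> (\<tau>*\<tau>-3*\<tau>-2)/(2*\<tau>)" unfolding \<epsilon>_def by simp
    then have "\<tau> * \<epsilon> \<le> \<tau> * ((\<tau>*\<tau>-3*\<tau>-2)/(2*\<tau>))" using t3 by (intro mult_left_mono) auto
    also have "\<dots> = (\<tau>*\<tau>-3*\<tau>-2)/2" using t3 by simp
    finally have "\<tau> * \<epsilon> \<le> (\<tau>*\<tau>-3*\<tau>-2)/2" .
    then show ?thesis unfolding e2_def using poly by (simp add: algebra_simps)
  qed
  define c where "c = (3::real) powr (1/(\<tau>-3))"
  define q0 where "q0 = nat \<lceil>c\<rceil> + 1"
  have q01: "q0 \<ge> 1" unfolding q0_def by simp
  have q0p: "x powr (\<tau>-3) \<ge> 3" if "x \<ge> real q0" for x :: real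
  proof -
    have cpos: "c > 0" unfolding c_def by simp
    have "x \<ge> c" using that unfolding q0_def by linarith
    then have "x powr (\<tau>-3) \<ge> c powr (\<tau>-3)" using cpos t3 by (intro powr_mono2) auto
    also have "c powr (\<tau>-3) = 3" unfolding c_def using t3 by (simp add: powr_powr)
    finally show ?thesis .
  qed
  define K where "K = 2 * (\<Sum>n. real n powr (-e1)) * (\<Sum>n. real n powr (-e2))"
  have Fb: "measure lborel (Fset \<tau> q0 m) \<le> K * real m powr (-(1+\<epsilon>))" for m
    using Fset_bound[OF t3 ep q01 q0p e1_def e2_def e1 e2] unfolding K_def by simp
  have summ: "summable (\<lambda>m. measure lborel (Fset \<tau> q0 m))"
  proof (rule summable_comparison_test')
    show "summable (\<lambda>m. K * real m powr (-(1+\<epsilon>)))"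
      using ep by (intro summable_mult) (simp add: summable_real_powr_iff)
    show "norm (measure lborel (Fset \<tau> q0 m)) \<le> K * real m powr (-(1+\<epsilon>))" for m
      using Fb[of m] by simp
  qed
  have BC: "AE g in lborel. eventually (\<lambda>m. g \<in> space lborel - Fset \<tau> q0 m) sequentially"
    by (rule borel_cantelli_AE1[OF Fset_sets Fset_fin summ])
  show ?thesis
    using BC
  proof (rule eventually_mono)
    fix g :: real
    assume ev: "eventually (\<lambda>m. g \<in> space lborel - Fset \<tau> q0 m) sequentially"
    then obtain M where M: "\<And>m. m \<ge> M \<Longrightarrow> g \<notin> Fset \<tau> q0 m"
      unfolding eventually_sequentially by auto
    show "0 < g \<and> g < 1/2 \<longrightarrow>
    (\<forall>\<alpha>\<in>Dset g \<tau>. \<forall>\<^sub>F n in sequentially. even n \<longrightarrow>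
      (cf_p \<alpha> n / cf_q \<alpha> n + g / cf_q \<alpha> n powr (\<tau> + 1)
         < cf_p \<alpha> (n+2) / cf_q \<alpha> (n+2) - g / cf_q \<alpha> (n+2) powr (\<tau> + 1)
       \<longleftrightarrow>
       cf_p \<alpha> n / cf_q \<alpha> n + g / cf_q \<alpha> n powr (\<tau> + 1)
         < cf_p \<alpha> (n+2) / cf_q \<alpha> (n+2) - g / cf_q \<alpha> (n+2) powr (\<tau> + 1)
           - 2 * g / cf_q \<alpha> (n+2) powr (\<tau> - 1)))"
    proof (intro impI ballI)
      assume g: "0 < g \<and> g < 1/2"
      fix \<alpha> assume \<alpha>D: "\<alpha> \<in> Dset g \<tau>"
      have irr: "\<alpha> \<notin> \<rat>" by (rule Dset_irr[OF \<alpha>D]) (use g in simp)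
      have a01: "0 < \<alpha>" "\<alpha> < 1" using \<alpha>D unfolding Dset_def by auto
      have A: "\<And>k. k \<ge> 1 \<Longrightarrow> cf_a \<alpha> k \<ge> 1" using cf_a_ge1[OF irr a01] by blast
      show "\<forall>\<^sub>F n in sequentially. even n \<longrightarrow>
      (cf_p \<alpha> n / cf_q \<alpha> n + g / cf_q \<alpha> n powr (\<tau> + 1)
         < cf_p \<alpha> (n+2) / cf_q \<alpha> (n+2) - g / cf_q \<alpha> (n+2) powr (\<tau> + 1)
       \<longleftrightarrow>
       cf_p \<alpha> n / cf_q \<alpha> n + g / cf_q \<alpha> n powr (\<tau> + 1)
         < cf_p \<alpha> (n+2) / cf_q \<alpha> (n+2) - g / cf_q \<alpha> (n+2) powr (\<tau> + 1)
           - 2 * g / cf_q \<alpha> (n+2) powr (\<tau> - 1))"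
        unfolding eventually_sequentially
      proof (intro exI[of _ "M + q0"] allI impI)
        fix n assume n: "n \<ge> M + q0" and evn: "even n"
        define Q where "Q = cf_q \<alpha> n"
        define Q' where "Q' = cf_q \<alpha> (n+2)"
        define aa where "aa = cf_a \<alpha> (n+2)"
        have Qb: "int n \<le> Q" "1 \<le> Q" using cf_q_ge[OF A, of n] unfolding Q_def by auto
        have Q'b: "int (n+2) \<le> Q'" using cf_q_ge[OF A, of "n+2"] unfolding Q'_def by auto
        have aQ: "aa \<le> Q'" "Q \<le> Q'" using cf_a_le_q[OF A, of n] unfolding aa_def Q_def Q'_def by auto
        have a1: "aa \<ge> 1" using A[of "n+2"] unfolding aa_def by simp
        have det: "cf_p \<alpha> (n+2) * Q - cf_p \<alpha> n * Q' = aa"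
          using cf_det2[of \<alpha> n] evn unfolding Q_def Q'_def aa_def by simp
        have detr: "real_of_int (cf_p \<alpha> (n+2)) * real_of_int Q - real_of_int (cf_p \<alpha> n) * real_of_int Q' = real_of_int aa"
          using arg_cong[OF det, of real_of_int] by simp
        have notbad: "g \<notin> bad \<tau> (real_of_int Q) (real_of_int Q') (real_of_int aa)"
        proof
          assume gb: "g \<in> bad \<tau> (real_of_int Q) (real_of_int Q') (real_of_int aa)"
          have "nat Q' \<ge> M" using n Q'b by linarith
          moreover have "g \<in> Fset \<tau> q0 (nat Q')"
            unfolding Fset_def
          proof (intro UN_I)
            show "nat Q \<in> {q0..nat Q'}" using n Qb aQ by auto
            show "nat aa \<in> {1..nat Q'}" using a1 aQ by auto
            show "g \<in> bad \<tau> (real (nat Q)) (real (nat Q')) (real (nat aa))"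
              using gb Qb a1 aQ by simp
          qed
          ultimately show False using M by blast
        qed
        show "(cf_p \<alpha> n / cf_q \<alpha> n + g / cf_q \<alpha> n powr (\<tau> + 1)
         < cf_p \<alpha> (n+2) / cf_q \<alpha> (n+2) - g / cf_q \<alpha> (n+2) powr (\<tau> + 1)
       \<longleftrightarrow>
       cf_p \<alpha> n / cf_q \<alpha> n + g / cf_q \<alpha> n powr (\<tau> + 1)
         < cf_p \<alpha> (n+2) / cf_q \<alpha> (n+2) - g / cf_q \<alpha> (n+2) powr (\<tau> + 1)
           - 2 * g / cf_q \<alpha> (n+2) powr (\<tau> - 1))"
        proof -
          have "real_of_int Q \<ge> 1" "real_of_int Q' \<ge> 1" using Qb aQ by simp_all
          note K = key[OF this _ _ detr notbad]
          show ?thesis using K g unfolding Q_def Q'_def by simp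
        qed
      qed
    qed
  qed
qed

end
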